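(* Let $a,b\geq 0$ with $a+b\leq 1$. Then (1) $4ab\leq a+b$. (2) If moreover $a,b>0$, then the function $$x\mapsto S(a,b,x)=1-\frac{a^2b^2}{(a+b+1)(a+b)}-\frac{ab(a+1)(b+1)(a+b+ab+2)}{(a+b)(a+b+1)(a+b+2)}\,x$$ is negative for all $x\geq c(a,b)$, where $$c(a,b)=\frac{(a+b)(a+b-2ab)(a+b+1)}{ab\big((a+b+1)(a+b-2ab)+ab(a+b)\big)}.$$ *)

theory Defs
  imports Complex_Main
begin

definition S :: "real \<Rightarrow> real \<Rightarrow> real \<Rightarrow> real" where
  "S a b x = 1 - (a^2 * b^2) / ((a + b + 1) * (a + b))
     - (a * b * (a + 1) * (b + 1) * (a + b + a * b + 2)) / ((a + b) * (a + b + 1) * (a + b + 2)) * x"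

definition c :: "real \<Rightarrow> real \<Rightarrow> real" where
  "c a b = ((a + b) * (a + b - 2 * a * b) * (a + b + 1))
     / (a * b * ((a + b + 1) * (a + b - 2 * a * b) + a * b * (a + b)))"

end

theory Submission
  imports Defs
begin

lemma keyF:
  fixes s p :: real
  assumes "0 < s" "s \<le> 1" "0 \<le> p" "4 * p \<le> s^2"
  shows "s^2*(s+1)^2 - 2*p*s*(s+1)*(s+2) - p^2*(3*s^2+6*s+4) > 0"
proof -
  have m: "2*p*s*(s+1)*(s+2) + p^2*(3*s^2+6*s+4) \<le> 2*(s^2/4)*s*(s+1)*(s+2) + (s^2/4)^2*(3*s^2+6*s+4)"
  proof (rule add_mono)
    show "2*p*s*(s+1)*(s+2) \<le> 2*(s^2/4)*s*(s+1)*(s+2)" using assms by (intro mult_right_mono) auto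
    have "p^2 \<le> (s^2/4)^2" using assms by (intro power_mono) auto
    then show "p^2*(3*s^2+6*s+4) \<le> (s^2/4)^2*(3*s^2+6*s+4)" using assms by (intro mult_right_mono) auto
  qed
  have "s^4 \<le> s^1" "s^3 \<le> s^1" "s^2 \<le> s^1" using assms
    by (intro power_decreasing; simp)+
  hence G: "-3*s^4 -14*s^3 -12*s^2 +16*s +16 > 0" using assms by simp
  have "s^2*(s+1)^2 - (2*(s^2/4)*s*(s+1)*(s+2) + (s^2/4)^2*(3*s^2+6*s+4)) = s^2/16 * (-3*s^4 -14*s^3 -12*s^2 +16*s +16)"
    by (simp add: field_simps power2_eq_square power3_eq_cube power4_eq_xxxx)
  moreover have "s^2/16 * (-3*s^4 -14*s^3 -12*s^2 +16*s +16) > 0" using G assms by simp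
  ultimately show ?thesis using m by linarith
qed

theorem lemma5:
  fixes a b :: real
  assumes "a \<ge> 0" and "b \<ge> 0" and "a + b \<le> 1"
  shows "4 * a * b \<le> a + b \<and>
         (a > 0 \<and> b > 0 \<longrightarrow> (\<forall>x. x \<ge> c a b \<longrightarrow> S a b x < 0))"
proof -
  have sq: "4*(a*b) \<le> (a+b)^2" using sum_squares_ge_zero[of "a-b" 0]
    by (simp add: power2_eq_square algebra_simps)
  have ss: "(a+b)^2 \<le> a+b" using assms by (simp add: power2_eq_square mult_le_one mult_left_le)
  have P1: "4 * a * b \<le> a + b" using sq ss by simp
  have P2: "S a b x < 0" if ap: "a > 0" and bp: "b > 0" and xc: "x \<ge> c a b" for x
  proof -
    define s where "s = a+b"
    define p where "p = a*b"
    have s0: "s > 0" "s \<le> 1" using ap bp assms s_def by auto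
    have p0: "p > 0" using ap bp p_def by simp
    have sq': "4*p \<le> s^2" using sq s_def p_def by simp
    have ss': "s^2 \<le> s" using ss s_def by simp
    have u0: "s - 2*p > 0" using sq' ss' s0 by linarith
    define N where "N = (s+1)*(s-2*p)+p*s"
    have N0: "N > 0" using u0 s0 p0 N_def by (simp add: add_pos_pos)
    define K where "K = p*(s+p+1)*(s+p+2)/(s*(s+1)*(s+2))"
    have K0: "K > 0" using s0 p0 K_def by simp
    have Sf: "S a b y = 1 - p^2/((s+1)*s) - K*y" for y
      unfolding S_def K_def s_def p_def by (simp add: algebra_simps power_mult_distrib)
    have cf: "c a b = s*(s-2*p)*(s+1)/(p*N)"
      unfolding c_def N_def s_def p_def by (simp add: algebra_simps)
    define F where "F = s^2*(s+1)^2 - 2*p*s*(s+1)*(s+2) - p^2*(3*s^2+6*s+4)"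
    have F0: "F > 0" unfolding F_def using keyF[OF s0 less_imp_le[OF p0] sq'] .
    have sn: "s \<noteq> 0" "s+1 \<noteq> 0" "s+2 \<noteq> 0" "p \<noteq> 0" "N \<noteq> 0" using s0 p0 N0 by auto
    have Kc: "K * c a b * (s*(s+1)*(s+2)*N) = (s+p+1)*(s+p+2)*(s-2*p)*(s*(s+1))"
    proof -
      have "K * c a b * (s*(s+1)*(s+2)*N) = (p*(s+p+1)*(s+p+2) * (s*(s-2*p)*(s+1)) * (s*(s+1)*(s+2)*N)) / ((s*(s+1)*(s+2)) * (p*N))"
        unfolding K_def cf by simp
      also have "(p*(s+p+1)*(s+p+2) * (s*(s-2*p)*(s+1)) * (s*(s+1)*(s+2)*N)) = ((s+p+1)*(s+p+2)*(s-2*p)*(s*(s+1))) * ((s*(s+1)*(s+2)) * (p*N))"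
        by (simp add: algebra_simps)
      finally show ?thesis using sn by simp
    qed
    have Pq: "p^2/((s+1)*s) * (s*(s+1)*(s+2)*N) = p^2*(s+2)*N"
    proof -
      have "s*(s+1)*(s+2)*N = ((s+1)*s)*((s+2)*N)" by (simp add: algebra_simps)
      hence "p^2/((s+1)*s) * (s*(s+1)*(s+2)*N) = (p^2/((s+1)*s) * ((s+1)*s))*((s+2)*N)" by simp
      also have "p^2/((s+1)*s) * ((s+1)*s) = p^2" using sn by simp
      finally show ?thesis by simp
    qed
    have "S a b (c a b) * (s*(s+1)*(s+2)*N) = s*(s+1)*(s+2)*N - p^2/((s+1)*s) * (s*(s+1)*(s+2)*N)
        - K * c a b * (s*(s+1)*(s+2)*N)" unfolding Sf by (simp add: algebra_simps)
    also have "\<dots> = s*(s+1)*(s+2)*N - p^2*(s+2)*N - (s+p+1)*(s+p+2)*(s-2*p)*(s*(s+1))"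
      using Pq Kc by simp
    also have "\<dots> = -(p*F)" unfolding N_def F_def by (simp add: algebra_simps power2_eq_square)
    finally have eq: "S a b (c a b) * (s*(s+1)*(s+2)*N) = -(p*F)" .
    have pos: "s*(s+1)*(s+2)*N > 0" using s0 N0 by simp
    have "S a b (c a b) < 0"
    proof (rule ccontr)
      assume "\<not> S a b (c a b) < 0"
      hence "S a b (c a b) * (s*(s+1)*(s+2)*N) \<ge> 0" using pos by simp
      thus False using eq mult_pos_pos[OF p0 F0] by simp
    qed
    moreover have "S a b x \<le> S a b (c a b)" unfolding Sf using K0 xc
      by (simp add: mult_left_mono)
    ultimately show ?thesis by linarith
  qed
  show ?thesis using P1 P2 by blast
qed

end
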